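(* Let $\mu$ be a probability measure on $\mathbb{C}$ with $\int|z|^n\,d\mu<\infty$ for all $n$, and let $\Phi_n$ be its monic orthogonal polynomials. Suppose $z_0$ is a pure point of $\mu$ and $\delta=\mathrm{dist}\bigl(z_0,\mathrm{cvh}(\mathrm{supp}(\mu)\setminus\{z_0\})\bigr)>0$. Then each $\Phi_n$ has at most one zero in $\{z:|z-z_0|<\delta/2\}$.
   Context: $\Phi_n$ is the monic polynomial of degree $n$ orthogonal in $L^2(\mathbb{C},d\mu)$ to all polynomials of degree less than $n$ (defined whenever $\mathrm{supp}\,\mu$ has at least $n$ points). $\mathrm{cvh}$ denotes convex hull. *)

theory Defs
  imports "HOL-Probability.Probability" "HOL-Computational_Algebra.Polynomial"
begin

definition msupp :: "complex measure \<Rightarrow> complex set" where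
  "msupp \<mu> = {z. \<forall>e>0. emeasure \<mu> (ball z e) > 0}"

definition poly_inner :: "complex measure \<Rightarrow> complex poly \<Rightarrow> complex poly \<Rightarrow> complex" where
  "poly_inner \<mu> f g = (\<integral>z. poly f z * cnj (poly g z) \<partial>\<mu>)"

definition is_monic_OP :: "complex measure \<Rightarrow> nat \<Rightarrow> complex poly \<Rightarrow> bool" where
  "is_monic_OP \<mu> n p \<longleftrightarrow> degree p = n \<and> lead_coeff p = 1 \<and>
     (\<forall>q. degree q < n \<longrightarrow> poly_inner \<mu> p q = 0)"

text \<open>Phi_n: the (unique, when supp mu has at least n points) monic orthogonal polynomial.\<close>
definition Phi :: "complex measure \<Rightarrow> nat \<Rightarrow> complex poly" where
  "Phi \<mu> n = (THE p. is_monic_OP \<mu> n p)"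

end

theory Submission
  imports Defs
begin

lemma real_key:
  fixes a1 a2 b1 b2 A B d :: real
  assumes A: "A \<ge> 0" "A\<^sup>2 = a1\<^sup>2 + a2\<^sup>2" "A < d/2"
    and B: "B \<ge> 0" "B\<^sup>2 = b1\<^sup>2 + b2\<^sup>2" "B < d/2"
  shows "2 * d * (d - a1 - b1) + (a1 * b1 - a2 * b2) - A * B > 0"
proof -
  have "a1\<^sup>2 \<le> A\<^sup>2" using A by simp
  then have a1: "\<bar>a1\<bar> \<le> A" using A(1) by (metis power2_abs power2_le_imp_le)
  have "b1\<^sup>2 \<le> B\<^sup>2" using B by simp
  then have b1: "\<bar>b1\<bar> \<le> B" using B(1) by (metis power2_abs power2_le_imp_le)
  have a2: "a2\<^sup>2 \<le> 2 * A * (A - a1)"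
  proof -
    have "a2\<^sup>2 = (A - a1) * (A + a1)" using A(2) by (simp add: algebra_simps power2_eq_square)
    also have "\<dots> \<le> (A - a1) * (2 * A)" using a1 by (intro mult_left_mono) auto
    finally show ?thesis by (simp add: algebra_simps)
  qed
  have b2: "b2\<^sup>2 \<le> 2 * B * (B - b1)"
  proof -
    have "b2\<^sup>2 = (B - b1) * (B + b1)" using B(2) by (simp add: algebra_simps power2_eq_square)
    also have "\<dots> \<le> (B - b1) * (2 * B)" using b1 by (intro mult_left_mono) auto
    finally show ?thesis by (simp add: algebra_simps)
  qed
  define x where "x = A * (B - b1)"
  define y where "y = B * (A - a1)"
  have x0: "x \<ge> 0" unfolding x_def using A(1) b1 by auto
  have y0: "y \<ge> 0" unfolding y_def using B(1) a1 by auto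
  have "(a2 * b2)\<^sup>2 = a2\<^sup>2 * b2\<^sup>2" by (simp add: power_mult_distrib)
  also have "\<dots> \<le> (2 * A * (A - a1)) * (2 * B * (B - b1))"
    using a2 b2 A(1) a1 by (intro mult_mono) auto
  also have "\<dots> = 4 * x * y" unfolding x_def y_def by (simp add: algebra_simps)
  also have "\<dots> \<le> (x + y)\<^sup>2"
    using sum_squares_ge_zero[of "x - y" 0] by (simp add: power2_eq_square algebra_simps)
  finally have "(a2 * b2)\<^sup>2 \<le> (x + y)\<^sup>2" .
  then have ab2: "\<bar>a2 * b2\<bar> \<le> x + y" using x0 y0 by (metis power2_abs power2_le_imp_le add_nonneg_nonneg)
  have ab1: "A * B - a1 * b1 \<le> x + y"
  proof -
    have "A * B - a1 * b1 = A * (B - b1) + b1 * (A - a1)" by (simp add: algebra_simps)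
    also have "b1 * (A - a1) \<le> B * (A - a1)" using b1 a1 by (intro mult_right_mono) auto
    then have "A * (B - b1) + b1 * (A - a1) \<le> x + y" unfolding x_def y_def by simp
    finally show ?thesis .
  qed
  have "2 * x \<le> d * (B - b1)" unfolding x_def using A b1 by (intro mult_right_mono[of "2*A" d, simplified mult.assoc]) auto
  moreover have "2 * y \<le> d * (A - a1)" unfolding y_def using B a1 by (intro mult_right_mono[of "2*B" d, simplified mult.assoc]) auto
  moreover have "d * (2 * d - a1 - b1 - A - B) > 0"
    using A B a1 b1 by (intro mult_pos_pos) auto
  moreover have "a2 * b2 \<le> \<bar>a2 * b2\<bar>" by simp
  ultimately show ?thesis using ab1 ab2 by (simp add: algebra_simps)
qed

lemma key_ineq:
  fixes w a b :: complex and d :: real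
  assumes d: "d > 0" and w: "Re w \<ge> d" and a: "cmod a < d/2" and b: "cmod b < d/2"
  shows "Re ((w - a) * (w - b) * cnj w) > 0"
proof -
  have w0: "w \<noteq> 0" using d w by auto
  define Q where "Q = (w - a) * (w - b) / w"
  have "(w - a) * (w - b) * cnj w = complex_of_real ((cmod w)\<^sup>2) * Q"
    unfolding Q_def complex_norm_square using w0 by (simp add: field_simps)
  then have eq: "Re ((w - a) * (w - b) * cnj w) = (cmod w)\<^sup>2 * Re Q" by simp
  have Qe: "Q = w - a - b + a * b / w" unfolding Q_def using w0 by (simp add: field_simps)
  have n1: "cmod (2 * d - w) \<le> cmod w"
  proof -
    have "(cmod (2 * d - w))\<^sup>2 = (2 * d - Re w)\<^sup>2 + (Im w)\<^sup>2" by (simp add: cmod_power2)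
    also have "\<dots> \<le> (Re w)\<^sup>2 + (Im w)\<^sup>2" using d w by (simp add: power2_eq_square algebra_simps)
    also have "\<dots> = (cmod w)\<^sup>2" by (simp add: cmod_power2)
    finally show ?thesis by (metis power2_le_imp_le norm_ge_zero)
  qed
  have n2: "cmod (1 / w - 1 / (2 * d)) \<le> 1 / (2 * d)"
  proof -
    have "1 / w - 1 / (2 * d) = (2 * d - w) / (2 * d * w)" using w0 d by (simp add: field_simps)
    then have "cmod (1 / w - 1 / (2 * d)) = cmod (2 * d - w) / (2 * d * cmod w)"
      using d by (simp add: norm_divide norm_mult)
    also have "\<dots> \<le> cmod w / (2 * d * cmod w)" using d w0 n1 by (intro divide_right_mono) auto
    also have "\<dots> = 1 / (2 * d)" using w0 by simp
    finally show ?thesis .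
  qed
  have "a * b / w = a * b / (2 * d) + a * b * (1 / w - 1 / (2 * d))"
    using w0 d by (simp add: field_simps)
  then have "Re (a * b / w) = Re (a * b) / (2 * d) + Re (a * b * (1 / w - 1 / (2 * d)))"
    by simp
  moreover have "Re (a * b * (1 / w - 1 / (2 * d))) \<ge> - (cmod a * cmod b / (2 * d))"
  proof -
    have "\<bar>Re (a * b * (1 / w - 1 / (2 * d)))\<bar> \<le> cmod (a * b * (1 / w - 1 / (2 * d)))"
      by (rule abs_Re_le_cmod)
    also have "\<dots> = cmod a * cmod b * cmod (1 / w - 1 / (2 * d))" by (simp add: norm_mult)
    also have "\<dots> \<le> cmod a * cmod b * (1 / (2 * d))" using n2 by (intro mult_left_mono) auto
    finally show ?thesis by simp
  qed
  ultimately have reab: "Re (a * b / w) \<ge> (Re (a * b) - cmod a * cmod b) / (2 * d)"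
    by (simp add: diff_divide_distrib)
  have rk: "2 * d * (d - Re a - Re b) + (Re a * Re b - Im a * Im b) - cmod a * cmod b > 0"
    using a b by (intro real_key) (auto simp: cmod_power2)
  have "Re Q \<ge> d - Re a - Re b + (Re (a * b) - cmod a * cmod b) / (2 * d)"
    using reab w unfolding Qe by simp
  moreover have "d - Re a - Re b + (Re (a * b) - cmod a * cmod b) / (2 * d) > 0"
  proof -
    have "d - Re a - Re b + (Re (a * b) - cmod a * cmod b) / (2 * d) =
      (2 * d * (d - Re a - Re b) + (Re a * Re b - Im a * Im b) - cmod a * cmod b) / (2 * d)"
      using d by (simp add: field_simps)
    then show ?thesis using rk d by simp
  qed
  ultimately have "Re Q > 0" by linarith
  then show ?thesis unfolding eq using w0 by simp
qed

lemma key2: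
  fixes z z0 z1 z2 e :: complex and d :: real
  assumes d: "d > 0" and e: "cmod e = d" and z: "Re ((z - z0) * cnj e) \<ge> d\<^sup>2"
    and z1: "dist z1 z0 < d/2" and z2: "dist z2 z0 < d/2"
  shows "Re ((z - z1) * (z - z2) * cnj (z - z0) * cnj e) > 0"
proof -
  define u where "u = cnj e / d"
  have ee: "cnj e * e = complex_of_real (d\<^sup>2)"
    using complex_norm_square[of e] e by (simp add: mult.commute)
  have cu: "cmod u = 1" unfolding u_def using e d by (simp add: norm_divide)
  define w where "w = (z - z0) * u"
  define a where "a = (z1 - z0) * u"
  define b where "b = (z2 - z0) * u"
  have "Re w = Re ((z - z0) * cnj e) / d" unfolding w_def u_def
    by (simp add: mult.assoc[symmetric])
  also have "\<dots> \<ge> d\<^sup>2 / d" using z d by (intro divide_right_mono) auto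
  finally have rw: "Re w \<ge> d" using d by (simp add: power2_eq_square)
  have ca: "cmod a < d/2" unfolding a_def using cu z1 by (simp add: norm_mult dist_norm)
  have cb: "cmod b < d/2" unfolding b_def using cu z2 by (simp add: norm_mult dist_norm)
  have pos: "Re ((w - a) * (w - b) * cnj w) > 0" by (rule key_ineq[OF d rw ca cb])
  have "(w - a) * (w - b) * cnj w = (z - z1) * (z - z2) * cnj (z - z0) * (u * u * cnj u)"
    unfolding w_def a_def b_def by (simp add: algebra_simps)
  also have "u * u * cnj u = cnj e / d"
  proof -
    have "u * u * cnj u = cnj e * (cnj e * e) / d ^ 3" unfolding u_def
      by (simp add: field_simps power3_eq_cube)
    also have "\<dots> = cnj e / d" unfolding ee using d by (simp add: field_simps power2_eq_square power3_eq_cube)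
    finally show ?thesis .
  qed
  finally have "Re ((w - a) * (w - b) * cnj w) = Re ((z - z1) * (z - z2) * cnj (z - z0) * cnj e) / d"
    by (simp add: mult.assoc[symmetric])
  then show ?thesis using pos d by (simp add: zero_less_divide_iff)
qed

lemma separation:
  fixes T :: "complex set"
  assumes dd: "d = infdist z0 (convex hull T)" and dpos: "d > 0"
  shows "\<exists>e. cmod e = d \<and> (\<forall>s\<in>T. Re ((s - z0) * cnj e) \<ge> d\<^sup>2)"
proof -
  define C where "C = closure (convex hull T)"
  have "T \<noteq> {}" using dd dpos by (auto simp: infdist_def)
  then have Cne: "C \<noteq> {}" unfolding C_def by simp
  have Ccl: "closed C" and Ccv: "convex C" unfolding C_def by (auto intro: convex_closure)
  have dC: "infdist z0 C = d" unfolding C_def dd by (simp add: infdist_eq_setdist)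
  obtain p where p: "p \<in> C" "infdist z0 C = dist z0 p" by (rule infdist_attains_inf[OF Ccl Cne])
  have cl: "\<forall>y\<in>C. dist z0 p \<le> dist z0 y" using p(2) by (metis infdist_le)
  define e where "e = p - z0"
  have ce: "cmod e = d" unfolding e_def using p(2) dC by (simp add: dist_norm norm_minus_commute)
  have "Re ((s - z0) * cnj e) \<ge> d\<^sup>2" if "s \<in> T" for s
  proof -
    have sC: "s \<in> C" unfolding C_def using that by (meson closure_subset hull_subset subsetD)
    have "(z0 - p) \<bullet> (s - p) \<le> 0" by (rule any_closest_point_dot[OF Ccv Ccl p(1) sC cl])
    moreover have "Re ((s - z0) * cnj e) = (s - p) \<bullet> e + e \<bullet> e"
      unfolding e_def by (simp add: inner_complex_def algebra_simps)
    moreover have "e \<bullet> e = d\<^sup>2" using ce by (simp add: power2_norm_eq_inner[symmetric])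
    moreover have "(z0 - p) \<bullet> (s - p) = - ((s - p) \<bullet> e)" unfolding e_def
      by (simp add: inner_complex_def algebra_simps)
    ultimately show ?thesis by linarith
  qed
  then show ?thesis using ce by blast
qed


lemma poly_norm_bound:
  fixes p :: "complex poly"
  shows "norm (poly p z) \<le> (\<Sum>i\<le>degree p. norm (coeff p i)) * (1 + norm z) ^ degree p"
proof -
  have "norm (poly p z) \<le> (\<Sum>i\<le>degree p. norm (coeff p i * z ^ i))"
    unfolding poly_altdef by (rule norm_sum)
  also have "\<dots> \<le> (\<Sum>i\<le>degree p. norm (coeff p i) * (1 + norm z) ^ degree p)"
  proof (rule sum_mono)
    fix i assume "i \<in> {..degree p}"
    then have i: "i \<le> degree p" by simp
    have "norm z ^ i \<le> (1 + norm z) ^ i" by (intro power_mono) auto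
    also have "\<dots> \<le> (1 + norm z) ^ degree p" by (intro power_increasing i) auto
    finally show "norm (coeff p i * z ^ i) \<le> norm (coeff p i) * (1 + norm z) ^ degree p"
      by (simp add: norm_mult norm_power mult_left_mono)
  qed
  also have "\<dots> = (\<Sum>i\<le>degree p. norm (coeff p i)) * (1 + norm z) ^ degree p"
    by (simp add: sum_distrib_right)
  finally show ?thesis .
qed

lemma one_plus_pow_le: "(0::real) \<le> t \<Longrightarrow> (1 + t) ^ N \<le> 2 ^ N * (1 + t ^ N)"
proof (cases "t \<le> 1")
  case True
  assume "0 \<le> t"
  have "(1 + t) ^ N \<le> 2 ^ N" using True \<open>0 \<le> t\<close> by (intro power_mono) auto
  also have "\<dots> \<le> 2 ^ N * (1 + t ^ N)" using \<open>0 \<le> t\<close> by simp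
  finally show ?thesis .
next
  case False
  assume "0 \<le> t"
  have "(1 + t) ^ N \<le> (2 * t) ^ N" using False by (intro power_mono) auto
  also have "\<dots> \<le> 2 ^ N * (1 + t ^ N)" using \<open>0 \<le> t\<close> by (simp add: power_mult_distrib)
  finally show ?thesis .
qed

locale opm =
  fixes \<mu> :: "complex measure"
  assumes borel: "sets \<mu> = sets borel"
    and prob: "prob_space \<mu>"
    and moments: "\<And>k::nat. integrable \<mu> (\<lambda>z. norm z ^ k)"
begin

lemma meas: "h \<in> borel_measurable borel \<Longrightarrow> h \<in> borel_measurable \<mu>"
  by (simp add: measurable_cong_sets[OF borel refl])

lemma meas_cont: "continuous_on UNIV h \<Longrightarrow> h \<in> borel_measurable \<mu>"
  by (intro meas borel_measurable_continuous_onI)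

lemma integrable_bounded_poly:
  fixes h :: "complex \<Rightarrow> 'b::{banach, second_countable_topology}"
  assumes "continuous_on UNIV h" "\<And>z. norm (h z) \<le> C * (1 + norm z) ^ N"
  shows "integrable \<mu> h"
proof -
  interpret prob_space \<mu> by (rule prob)
  have "integrable \<mu> (\<lambda>z. \<bar>C\<bar> * 2 ^ N * (1 + norm z ^ N))"
    using moments[of N] by auto
  then show ?thesis
  proof (rule Bochner_Integration.integrable_bound)
    show "h \<in> borel_measurable \<mu>" by (rule meas_cont[OF assms(1)])
    show "AE x in \<mu>. norm (h x) \<le> norm (\<bar>C\<bar> * 2 ^ N * (1 + norm x ^ N))"
    proof (intro AE_I2)
      fix x
      have "norm (h x) \<le> C * (1 + norm x) ^ N" by (rule assms(2))
      also have "\<dots> \<le> \<bar>C\<bar> * (1 + norm x) ^ N" by (intro mult_right_mono) auto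
      also have "\<dots> \<le> \<bar>C\<bar> * (2 ^ N * (1 + norm x ^ N))"
        by (intro mult_left_mono one_plus_pow_le) auto
      also have "\<dots> = norm (\<bar>C\<bar> * 2 ^ N * (1 + norm x ^ N))" by simp
      finally show "norm (h x) \<le> norm (\<bar>C\<bar> * 2 ^ N * (1 + norm x ^ N))" .
    qed
  qed
qed

lemma integrable_pp: "integrable \<mu> (\<lambda>z. poly f z * cnj (poly g z))"
proof (rule integrable_bounded_poly)
  show "continuous_on UNIV (\<lambda>z. poly f z * cnj (poly g z))"
    by (intro continuous_intros)
  fix z
  have "norm (poly f z * cnj (poly g z)) = norm (poly f z) * norm (poly g z)"
    by (simp add: norm_mult)
  also have "\<dots> \<le> ((\<Sum>i\<le>degree f. norm (coeff f i)) * (1 + norm z) ^ degree f) *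
     ((\<Sum>i\<le>degree g. norm (coeff g i)) * (1 + norm z) ^ degree g)"
    by (intro mult_mono poly_norm_bound) (auto intro!: sum_nonneg mult_nonneg_nonneg)
  also have "\<dots> = ((\<Sum>i\<le>degree f. norm (coeff f i)) * (\<Sum>i\<le>degree g. norm (coeff g i)))
      * (1 + norm z) ^ (degree f + degree g)"
    by (simp add: power_add algebra_simps)
  finally show "norm (poly f z * cnj (poly g z)) \<le> \<dots>" .
qed

lemma space_eq: "space \<mu> = UNIV"
  using sets_eq_imp_space_eq[OF borel] by simp

lemma sets_ball[simp]: "ball x e \<in> sets \<mu>"
  using borel by simp

lemma pi_add1: "poly_inner \<mu> (f + g) h = poly_inner \<mu> f h + poly_inner \<mu> g h"
  unfolding poly_inner_def by (simp add: distrib_right integral_add integrable_pp)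

lemma pi_smult1: "poly_inner \<mu> (smult c f) h = c * poly_inner \<mu> f h"
  unfolding poly_inner_def by (simp add: mult.assoc)

lemma pi_cnj: "poly_inner \<mu> g f = cnj (poly_inner \<mu> f g)"
proof -
  have "cnj (\<integral>z. poly f z * cnj (poly g z) \<partial>\<mu>) = (\<integral>z. cnj (poly f z * cnj (poly g z)) \<partial>\<mu>)"
    by (rule Bochner_Integration.integral_cnj[symmetric])
  then show ?thesis unfolding poly_inner_def by (simp add: mult.commute)
qed

lemma pi_add2: "poly_inner \<mu> h (f + g) = poly_inner \<mu> h f + poly_inner \<mu> h g"
  by (metis pi_cnj pi_add1 complex_cnj_add)

lemma pi_smult2: "poly_inner \<mu> h (smult c f) = cnj c * poly_inner \<mu> h f"
  by (metis pi_cnj pi_smult1 complex_cnj_mult)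

lemma pi_zero2[simp]: "poly_inner \<mu> h 0 = 0"
  unfolding poly_inner_def by simp

lemma pi_zero1[simp]: "poly_inner \<mu> 0 h = 0"
  unfolding poly_inner_def by simp

lemma pi_minus1: "poly_inner \<mu> (- f) h = - poly_inner \<mu> f h"
  using pi_smult1[of "-1" f h] by simp

lemma pi_diff1: "poly_inner \<mu> (f - g) h = poly_inner \<mu> f h - poly_inner \<mu> g h"
  using pi_add1[of f "-g" h] pi_minus1[of g h] by simp

lemma pi_diff2: "poly_inner \<mu> h (f - g) = poly_inner \<mu> h f - poly_inner \<mu> h g"
  by (metis pi_cnj pi_diff1 complex_cnj_diff)

lemma pi_sum1: "poly_inner \<mu> (\<Sum>i\<in>A. f i) h = (\<Sum>i\<in>A. poly_inner \<mu> (f i) h)"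
  by (induction A rule: infinite_finite_induct) (auto simp: pi_add1)

lemma pi_self: "poly_inner \<mu> p p = complex_of_real (\<integral>z. (cmod (poly p z))\<^sup>2 \<partial>\<mu>)"
proof -
  have "\<And>z. poly p z * cnj (poly p z) = complex_of_real ((cmod (poly p z))\<^sup>2)"
    by (rule complex_norm_square[symmetric])
  then have "poly_inner \<mu> p p = (\<integral>z. complex_of_real ((cmod (poly p z))\<^sup>2) \<partial>\<mu>)"
    unfolding poly_inner_def by (simp only:)
  also have "\<dots> = complex_of_real (\<integral>z. (cmod (poly p z))\<^sup>2 \<partial>\<mu>)"
    by (rule integral_complex_of_real)
  finally show ?thesis .
qed

lemma integrable_sq: "integrable \<mu> (\<lambda>z. (cmod (poly p z))\<^sup>2)"
proof -
  have "integrable \<mu> (\<lambda>z. norm (poly p z * cnj (poly p z)))"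
    by (intro integrable_norm integrable_pp)
  then show ?thesis by (simp add: norm_mult power2_eq_square)
qed

lemma pi_self_zero:
  assumes "poly_inner \<mu> p p = 0"
  shows "AE z in \<mu>. poly p z = 0"
proof -
  have "(\<integral>z. (cmod (poly p z))\<^sup>2 \<partial>\<mu>) = 0" using assms pi_self[of p] by simp
  then have "AE z in \<mu>. (cmod (poly p z))\<^sup>2 = 0"
    using integral_nonneg_eq_0_iff_AE[OF integrable_sq] by simp
  then show ?thesis by simp
qed

lemma vanish:
  assumes cont: "continuous_on UNIV h" and ae: "AE z in \<mu>. h z = 0" and s: "s \<in> msupp \<mu>"
  shows "h s = (0::'b::real_normed_vector)"
proof (rule ccontr)
  assume hs: "h s \<noteq> 0"
  have "isCont h s" using cont by (simp add: continuous_on_eq_continuous_at)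
  then have "\<forall>\<^sub>F y in at s. h y \<noteq> 0"
    using hs by (metis tendsto_imp_eventually_ne isCont_def)
  then obtain e where e: "e > 0" "\<And>y. y \<noteq> s \<Longrightarrow> dist y s < e \<Longrightarrow> h y \<noteq> 0"
    unfolding eventually_at by blast
  have sub: "ball s e \<subseteq> {y. h y \<noteq> 0}"
  proof
    fix y assume "y \<in> ball s e"
    then have "dist y s < e" by (simp add: dist_commute)
    then show "y \<in> {y. h y \<noteq> 0}" using e(2)[of y] hs by (cases "y = s") auto
  qed
  from ae obtain N where N: "{x \<in> space \<mu>. \<not> h x = 0} \<subseteq> N" "N \<in> null_sets \<mu>"
    by (rule AE_E) auto
  have "ball s e \<subseteq> N" using sub N(1) by (auto simp: space_eq)
  then have "emeasure \<mu> (ball s e) \<le> emeasure \<mu> N"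
    using N(2) by (intro emeasure_mono) auto
  then have "emeasure \<mu> (ball s e) = 0" using N(2) by (simp add: null_sets_def)
  moreover have "emeasure \<mu> (ball s e) > 0" using s e unfolding msupp_def by auto
  ultimately show False by simp
qed

lemma supp_AE: "AE z in \<mu>. z \<in> msupp \<mu>"
proof -
  define F where "F = {ball x e | x e. e > 0 \<and> emeasure \<mu> (ball x e) = 0}"
  have opn: "\<And>S. S \<in> F \<Longrightarrow> open S" unfolding F_def by auto
  obtain F' where F': "F' \<subseteq> F" "countable F'" "\<Union>F' = \<Union>F"
    using Lindelof[OF opn] by blast
  have "\<Union>(id ` F') \<in> null_sets \<mu>"
  proof (rule null_sets_UN'[OF F'(2)])
    fix S assume "S \<in> F'"
    then have "S \<in> F" using F' by auto
    then show "id S \<in> null_sets \<mu>" unfolding F_def by auto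
  qed
  then have "AE z in \<mu>. z \<notin> \<Union>F'" by (intro AE_not_in) simp
  moreover have "z \<in> msupp \<mu>" if "z \<notin> \<Union>F" for z
  proof -
    have "\<forall>e>0. emeasure \<mu> (ball z e) > 0"
    proof (intro allI impI)
      fix e :: real assume "e > 0"
      have "emeasure \<mu> (ball z e) \<noteq> 0"
      proof
        assume "emeasure \<mu> (ball z e) = 0"
        then have "ball z e \<in> F" using \<open>e > 0\<close> unfolding F_def by blast
        then show False using that \<open>e > 0\<close> by auto
      qed
      then show "emeasure \<mu> (ball z e) > 0" by (simp add: zero_less_iff_neq_zero)
    qed
    then show ?thesis unfolding msupp_def by simp
  qed
  ultimately show ?thesis using F'(3) by (auto elim!: AE_mp)
qed

lemma no_vanish:
  assumes "p \<noteq> 0" "degree p < n" "infinite (msupp \<mu>) \<or> n \<le> card (msupp \<mu>)"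
    and "\<And>s. s \<in> msupp \<mu> \<Longrightarrow> poly p s = 0"
  shows False
proof -
  have sub: "msupp \<mu> \<subseteq> {x. poly p x = 0}" using assms(4) by auto
  have fin: "finite {x. poly p x = 0}" by (rule poly_roots_finite[OF assms(1)])
  have "finite (msupp \<mu>)" using finite_subset[OF sub fin] .
  then have "n \<le> card (msupp \<mu>)" using assms(3) by auto
  also have "\<dots> \<le> card {x. poly p x = 0}" by (rule card_mono[OF fin sub])
  also have "\<dots> \<le> degree p" by (rule card_poly_roots_bound[OF assms(1)])
  finally show False using assms(2) by simp
qed

lemma self_zero_vanish:
  assumes "poly_inner \<mu> p p = 0" "s \<in> msupp \<mu>"
  shows "poly p s = 0"
  by (rule vanish[OF _ pi_self_zero[OF assms(1)] assms(2)]) (intro continuous_intros)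

lemma deg_less_or_zero:
  fixes r :: "complex poly"
  assumes "degree r \<le> m" "coeff r m = 0"
  shows "r = 0 \<or> degree r < m"
proof (cases "r = 0")
  case False
  then have "degree r \<noteq> m" using assms(2) by (metis leading_coeff_0_iff)
  then show ?thesis using assms(1) by simp
qed simp

lemma OP_exists:
  assumes "infinite (msupp \<mu>) \<or> n \<le> card (msupp \<mu>)"
  shows "\<exists>p. is_monic_OP \<mu> n p"
  using assms
proof (induction n rule: less_induct)
  case (less n)
  define P where "P = (\<lambda>k. SOME p. is_monic_OP \<mu> k p)"
  have P: "is_monic_OP \<mu> k (P k)" if "k < n" for k
  proof -
    have "infinite (msupp \<mu>) \<or> k \<le> card (msupp \<mu>)" using less.prems that by auto
    then have "\<exists>p. is_monic_OP \<mu> k p" using less.IH that by blast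
    then show ?thesis unfolding P_def by (rule someI_ex)
  qed
  have degP: "degree (P k) = k" "lead_coeff (P k) = 1" if "k < n" for k
    using P[OF that] unfolding is_monic_OP_def by auto
  have orth1: "poly_inner \<mu> (P k) (P j) = 0" if "j < k" "k < n" for j k
    using P[OF that(2)] that degP[of j] unfolding is_monic_OP_def by auto
  have orth: "poly_inner \<mu> (P k) (P j) = 0" if "j \<noteq> k" "k < n" "j < n" for j k
  proof (cases "j < k")
    case True then show ?thesis using orth1 that by blast
  next
    case False
    then have "k < j" using that by simp
    then have "poly_inner \<mu> (P j) (P k) = 0" using orth1 that by blast
    then show ?thesis by (subst pi_cnj) simp
  qed
  have npos: "poly_inner \<mu> (P k) (P k) \<noteq> 0" if "k < n" for k
  proof
    assume "poly_inner \<mu> (P k) (P k) = 0"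
    then have "\<And>s. s \<in> msupp \<mu> \<Longrightarrow> poly (P k) s = 0" by (rule self_zero_vanish)
    moreover have "P k \<noteq> 0" using degP(2)[OF that] by auto
    ultimately show False using no_vanish[of "P k" n] degP(1)[OF that] that less.prems by auto
  qed
  define c where "c = (\<lambda>k. poly_inner \<mu> (monom 1 n) (P k) / poly_inner \<mu> (P k) (P k))"
  define S where "S = (\<Sum>k<n. smult (c k) (P k))"
  define p where "p = monom 1 n - S"
  have coeffS: "coeff S i = 0" if "i \<ge> n" for i
  proof -
    have "coeff S i = (\<Sum>k<n. c k * coeff (P k) i)" unfolding S_def by (simp add: coeff_sum)
    also have "\<dots> = 0"
    proof (rule sum.neutral, intro ballI)
      fix k assume "k \<in> {..<n}"
      then have "degree (P k) < i" using degP(1)[of k] that by auto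
      then show "c k * coeff (P k) i = 0" by (simp add: coeff_eq_0)
    qed
    finally show ?thesis .
  qed
  have cpn: "coeff p n = 1" unfolding p_def using coeffS[of n] by (simp add: coeff_monom)
  have "degree p \<le> n"
    by (rule degree_le) (auto simp: p_def coeffS coeff_monom)
  moreover have "n \<le> degree p" using cpn by (intro le_degree) simp
  ultimately have degp: "degree p = n" by simp
  have orthP: "poly_inner \<mu> p (P j) = 0" if "j < n" for j
  proof -
    have "poly_inner \<mu> S (P j) = (\<Sum>k<n. c k * poly_inner \<mu> (P k) (P j))"
      unfolding S_def by (simp add: pi_sum1 pi_smult1)
    also have "\<dots> = (\<Sum>k<n. if k = j then c j * poly_inner \<mu> (P j) (P j) else 0)"
      by (rule sum.cong) (auto simp: orth that)
    also have "\<dots> = c j * poly_inner \<mu> (P j) (P j)" using that by simp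
    also have "\<dots> = poly_inner \<mu> (monom 1 n) (P j)" unfolding c_def using npos[OF that] by simp
    finally show ?thesis unfolding p_def by (simp add: pi_diff1)
  qed
  have "\<forall>q. degree q < m \<longrightarrow> m \<le> n \<longrightarrow> poly_inner \<mu> p q = 0" for m
  proof (induction m)
    case 0 then show ?case by simp
  next
    case (Suc m)
    show ?case
    proof (intro allI impI)
      fix q :: "complex poly" assume q: "degree q < Suc m" "Suc m \<le> n"
      show "poly_inner \<mu> p q = 0"
      proof (cases "degree q < m")
        case True then show ?thesis using Suc.IH q by auto
      next
        case False
        then have dq: "degree q = m" using q by simp
        define r where "r = q - smult (lead_coeff q) (P m)"
        have mn: "m < n" using q by simp
        have "degree r \<le> m" unfolding r_def using dq degP[OF mn]
          by (intro degree_diff_le) auto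
        moreover have "coeff r m = 0" unfolding r_def using dq degP[OF mn] by simp
        ultimately have "r = 0 \<or> degree r < m" by (rule deg_less_or_zero)
        then have r0: "poly_inner \<mu> p r = 0" using Suc.IH mn by auto
        have "q = smult (lead_coeff q) (P m) + r" unfolding r_def by simp
        then have "poly_inner \<mu> p q = cnj (lead_coeff q) * poly_inner \<mu> p (P m) + poly_inner \<mu> p r"
          by (metis pi_add2 pi_smult2)
        then show ?thesis using r0 orthP[OF mn] by simp
      qed
    qed
  qed
  then have "is_monic_OP \<mu> n p" unfolding is_monic_OP_def using degp cpn by auto
  then show ?case by blast
qed

lemma OP_unique:
  assumes "infinite (msupp \<mu>) \<or> n \<le> card (msupp \<mu>)"
    and "is_monic_OP \<mu> n p" "is_monic_OP \<mu> n p'"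
  shows "p = p'"
proof (rule ccontr)
  assume ne: "p \<noteq> p'"
  define d where "d = p - p'"
  have "degree d \<le> n" unfolding d_def using assms(2,3) unfolding is_monic_OP_def
    by (intro degree_diff_le) auto
  moreover have "coeff d n = 0" unfolding d_def using assms(2,3) unfolding is_monic_OP_def by auto
  ultimately have "d = 0 \<or> degree d < n" by (rule deg_less_or_zero)
  moreover have "d \<noteq> 0" using ne unfolding d_def by simp
  ultimately have dd: "degree d < n" by simp
  have "poly_inner \<mu> d d = poly_inner \<mu> p d - poly_inner \<mu> p' d" unfolding d_def by (rule pi_diff1)
  also have "\<dots> = 0" using assms(2,3) dd unfolding is_monic_OP_def by auto
  finally have "\<And>s. s \<in> msupp \<mu> \<Longrightarrow> poly d s = 0" by (intro self_zero_vanish)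
  then show False using no_vanish[OF \<open>d \<noteq> 0\<close> dd assms(1)] by blast
qed

lemma Phi_OP:
  assumes "infinite (msupp \<mu>) \<or> n \<le> card (msupp \<mu>)"
  shows "is_monic_OP \<mu> n (Phi \<mu> n)"
proof -
  have "\<exists>!p. is_monic_OP \<mu> n p" using OP_exists[OF assms] OP_unique[OF assms] by blast
  then show ?thesis unfolding Phi_def by (rule theI')
qed

end

theorem theoremA2p4:
  fixes \<mu> :: "complex measure" and z\<^sub>0 :: complex and \<delta> :: real and n :: nat
  assumes borel: "sets \<mu> = sets borel"
    and prob: "prob_space \<mu>"
    and moments: "\<And>k::nat. integrable \<mu> (\<lambda>z. norm z ^ k)"
    and pure_point: "emeasure \<mu> {z\<^sub>0} > 0"
    and delta_def: "\<delta> = infdist z\<^sub>0 (convex hull (msupp \<mu> - {z\<^sub>0}))"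
    and delta_pos: "\<delta> > 0"
    and defined: "infinite (msupp \<mu>) \<or> n \<le> card (msupp \<mu>)"
  shows "(\<Sum>z\<in>{z. dist z z\<^sub>0 < \<delta> / 2 \<and> poly (Phi \<mu> n) z = 0}. order z (Phi \<mu> n)) \<le> 1"
proof (rule ccontr)
  interpret opm \<mu> by (rule opm.intro[OF borel prob moments])
  define P where "P = Phi \<mu> n"
  have OP: "is_monic_OP \<mu> n P" unfolding P_def by (rule Phi_OP[OF defined])
  then have degP: "degree P = n" and lcP: "lead_coeff P = 1"
    and orthP: "\<And>q. degree q < n \<Longrightarrow> poly_inner \<mu> P q = 0"
    unfolding is_monic_OP_def by auto
  have P0: "P \<noteq> 0" using lcP by auto
  define A where "A = {z. dist z z\<^sub>0 < \<delta> / 2 \<and> poly P z = 0}"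
  have finA: "finite A" unfolding A_def using poly_roots_finite[OF P0] by (rule rev_finite_subset) auto
  assume "\<not> (\<Sum>z\<in>{z. dist z z\<^sub>0 < \<delta> / 2 \<and> poly (Phi \<mu> n) z = 0}. order z (Phi \<mu> n)) \<le> 1"
  then have big: "(\<Sum>z\<in>A. order z P) > 1" unfolding A_def P_def by simp
  have "\<exists>z1 z2. dist z1 z\<^sub>0 < \<delta>/2 \<and> dist z2 z\<^sub>0 < \<delta>/2 \<and> [:-z1,1:] * [:-z2,1:] dvd P"
  proof (cases "\<exists>z\<in>A. order z P \<ge> 2")
    case True
    then obtain z where z: "z \<in> A" "order z P \<ge> 2" by blast
    then have "[:-z,1:] ^ 2 dvd P" by (simp add: order_divides)
    then have "[:-z,1:] * [:-z,1:] dvd P" by (simp add: power2_eq_square)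
    then show ?thesis using z(1) unfolding A_def by blast
  next
    case False
    then have "(\<Sum>z\<in>A. order z P) \<le> (\<Sum>z\<in>A. 1)" by (intro sum_mono) auto
    then have "card A > Suc 0" using big by simp
    then obtain z1 z2 where zz: "z1 \<in> A" "z2 \<in> A" "z1 \<noteq> z2"
      using card_le_Suc0_iff_eq[OF finA] by (metis not_less)
    have "[:-z1,1:] dvd P" using zz(1) unfolding A_def by (simp add: poly_eq_0_iff_dvd)
    then obtain r where r: "P = [:-z1,1:] * r" by (elim dvdE)
    have "poly P z2 = 0" using zz(2) unfolding A_def by simp
    then have "poly r z2 = 0" using zz(3) unfolding r by simp
    then have "[:-z2,1:] dvd r" by (simp add: poly_eq_0_iff_dvd)
    then have "[:-z1,1:] * [:-z2,1:] dvd P" unfolding r by (rule mult_dvd_mono[OF dvd_refl])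
    then show ?thesis using zz unfolding A_def by blast
  qed
  then obtain z1 z2 where z12: "dist z1 z\<^sub>0 < \<delta>/2" "dist z2 z\<^sub>0 < \<delta>/2"
    and "[:-z1,1:] * [:-z2,1:] dvd P" by blast
  then obtain q where Pq: "P = [:-z1,1:] * [:-z2,1:] * q" by (elim dvdE)
  have q0: "q \<noteq> 0" using P0 Pq by auto
  have d2: "degree ([:-z1,1:] * [:-z2,1:]) = 2" by (subst degree_mult_eq) auto
  have "degree P = degree q + 2" unfolding Pq
    by (subst degree_mult_eq) (use q0 d2 in auto)
  then have dq: "degree q + 2 = n" using degP by simp
  define L where "L = [:-z\<^sub>0,1:] * q"
  have L0: "L \<noteq> 0" unfolding L_def using q0 by (simp only: mult_eq_0_iff) simp
  have "degree L = 1 + degree q" unfolding L_def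
    by (subst degree_mult_eq) (use q0 in auto)
  then have dL: "degree L < n" using dq by simp
  have int0: "poly_inner \<mu> P L = 0" by (rule orthP[OF dL])
  obtain e where e: "cmod e = \<delta>" "\<And>s. s \<in> msupp \<mu> - {z\<^sub>0} \<Longrightarrow> Re ((s - z\<^sub>0) * cnj e) \<ge> \<delta>\<^sup>2"
    using separation[OF delta_def delta_pos] by blast
  define F where "F = (\<lambda>z. poly P z * cnj (poly L z))"
  define K where "K = (\<lambda>z. Re ((z - z1) * (z - z2) * cnj (z - z\<^sub>0) * cnj e))"
  define g where "g = (\<lambda>z. Re (F z * cnj e))"
  have Fe: "F z * cnj e = (z - z1) * (z - z2) * cnj (z - z\<^sub>0) * cnj e * complex_of_real ((cmod (poly q z))\<^sup>2)" for z
  proof -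
    have "F z * cnj e = (z - z1) * (z - z2) * cnj (z - z\<^sub>0) * cnj e * (poly q z * cnj (poly q z))"
      unfolding F_def Pq L_def by (simp add: algebra_simps)
    then show ?thesis by (simp only: complex_norm_square)
  qed
  have gK: "g z = K z * (cmod (poly q z))\<^sup>2" for z
    unfolding g_def K_def Fe by simp
  have intF: "integrable \<mu> F" unfolding F_def by (rule integrable_pp)
  have intg: "integrable \<mu> g" unfolding g_def using intF by auto
  have "integral\<^sup>L \<mu> g = Re (integral\<^sup>L \<mu> F * cnj e)"
    unfolding g_def using intF by (simp add: integral_mult_left_zero)
  also have "integral\<^sup>L \<mu> F = 0" using int0 unfolding F_def poly_inner_def .
  finally have ig: "integral\<^sup>L \<mu> g = 0" by simp
  have Kpos: "K z > 0" if "z \<in> msupp \<mu>" "z \<noteq> z\<^sub>0" for z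
    unfolding K_def using that by (intro key2[OF delta_pos e(1) e(2) z12]) auto
  have Kz0: "K z\<^sub>0 = 0" unfolding K_def by simp
  have "AE z in \<mu>. 0 \<le> g z"
    using supp_AE
  proof (rule AE_mp, intro AE_I2 impI)
    fix z assume "z \<in> msupp \<mu>"
    then show "0 \<le> g z" unfolding gK using Kpos[of z] Kz0 by (cases "z = z\<^sub>0") auto
  qed
  then have "AE z in \<mu>. g z = 0" using integral_nonneg_eq_0_iff_AE[OF intg] ig by simp
  then have "AE z in \<mu>. poly L z = 0"
    using supp_AE
  proof (elim AE_mp, intro AE_I2 impI)
    fix z assume z: "z \<in> msupp \<mu>" "g z = 0"
    show "poly L z = 0"
    proof (cases "z = z\<^sub>0")
      case False
      then have "(cmod (poly q z))\<^sup>2 = 0" using z Kpos[of z] unfolding gK by simp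
      then show ?thesis unfolding L_def by simp
    qed (simp add: L_def)
  qed
  then have "\<And>s. s \<in> msupp \<mu> \<Longrightarrow> poly L s = 0"
    by (intro vanish) (auto intro: continuous_intros)
  then show False using no_vanish[OF L0 dL defined] by blast
qed

end
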